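(* Let $\varphi:\mathbb{R}\to\mathbb{R}$ be smooth with at most quadratic growth, and let $\Sigma$ be a properly immersed $[\varphi,\vec e_3]$-minimal surface in $\mathbb{R}^3$. Let $H_1,H_2$ be closed half-spaces of $\mathbb{R}^3$ whose boundary planes are vertical (i.e., contain the direction $\vec e_3$) and not parallel to each other. Then $\Sigma$ is not contained in $H_1\cap H_2$.
   Context: Surfaces are connected, orientable, immersed in $\mathbb{R}^3$, without boundary, with unit normal $N$; $\{\vec e_1,\vec e_2,\vec e_3\}$ is the standard basis. For a surface $\Sigma$, $\mu(p)=\langle p,\vec e_3\rangle$ is the height function and $\eta=\langle N,\vec e_3\rangle$ the angle function. Given a smooth $\varphi:\mathbb{R}\to\mathbb{R}$, $\Sigma$ is called $[\varphi,\vec e_3]$-minimal if its mean curvature vector $\vec H$ (trace of the second fundamental form, equal to the Laplacian of the position vector) satisfies $\vec H=\dot\varphi(\mu)\,\eta\,N$; equivalently, writing $\vec H=-HN$, $H=-\dot\varphi(\mu)\eta$. "At most quadratic growth" means there is $C>0$ with $|\dot\varphi(t)|\le C(1+|t|)$ for all $t\in\mathbb{R}$. Proper means the immersion is a proper map. *)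

theory Defs
  imports "HOL-Analysis.Analysis"
begin

definition pd :: "bool \<Rightarrow> (real \<times> real \<Rightarrow> real^3) \<Rightarrow> (real \<times> real \<Rightarrow> real^3)" where
  "pd b g = (\<lambda>(u, v). if b then vector_derivative (\<lambda>s. g (s, v)) (at u)
                             else vector_derivative (\<lambda>t. g (u, t)) (at v))"

definition pd_exists :: "bool \<Rightarrow> (real \<times> real \<Rightarrow> real^3) \<Rightarrow> real \<times> real \<Rightarrow> bool" where
  "pd_exists b g z = (case z of (u, v) \<Rightarrow>
      if b then (\<lambda>s. g (s, v)) differentiable (at u)
           else (\<lambda>t. g (u, t)) differentiable (at v))"

fun pds :: "bool list \<Rightarrow> (real \<times> real \<Rightarrow> real^3) \<Rightarrow> (real \<times> real \<Rightarrow> real^3)" where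
  "pds [] g = g"
| "pds (b # bs) g = pd b (pds bs g)"

definition smooth2_on :: "(real \<times> real) set \<Rightarrow> (real \<times> real \<Rightarrow> real^3) \<Rightarrow> bool" where
  "smooth2_on V g \<longleftrightarrow>
     (\<forall>bs. continuous_on V (pds bs g) \<and> (\<forall>b. \<forall>z\<in>V. pd_exists b (pds bs g) z))"

definition gramE :: "(real \<times> real \<Rightarrow> real^3) \<Rightarrow> real \<times> real \<Rightarrow> real" where
  "gramE f z = pd True f z \<bullet> pd True f z"
definition gramF :: "(real \<times> real \<Rightarrow> real^3) \<Rightarrow> real \<times> real \<Rightarrow> real" where
  "gramF f z = pd True f z \<bullet> pd False f z"
definition gramG :: "(real \<times> real \<Rightarrow> real^3) \<Rightarrow> real \<times> real \<Rightarrow> real" where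
  "gramG f z = pd False f z \<bullet> pd False f z"

definition immersion_at :: "(real \<times> real \<Rightarrow> real^3) \<Rightarrow> real \<times> real \<Rightarrow> bool" where
  "immersion_at f z \<longleftrightarrow> gramE f z * gramG f z - (gramF f z)\<^sup>2 \<noteq> 0"

text \<open>Scalar mean curvature w.r.t. unit normal n at parameter z:
  trace of second fundamental form, g^{ij} <f_ij, n>, so that the mean curvature
  vector (trace of the vector-valued 2nd fundamental form) equals  meancurv f n z *R n.\<close>
definition meancurv :: "(real \<times> real \<Rightarrow> real^3) \<Rightarrow> real^3 \<Rightarrow> real \<times> real \<Rightarrow> real" where
  "meancurv f n z =
     (gramG f z * (pd True (pd True f) z \<bullet> n)
      - 2 * gramF f z * (pd True (pd False f) z \<bullet> n)
      + gramE f z * (pd False (pd False f) z \<bullet> n))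
     / (gramE f z * gramG f z - (gramF f z)\<^sup>2)"

abbreviation e3 :: "real^3" where "e3 \<equiv> axis 3 1"

text \<open>A connected oriented immersed surface without boundary: a connected Hausdorff
  space M with a map X : M \<rightarrow> R^3 which near every point is, through a homeomorphic
  chart from an open planar domain, a smooth immersion; N is a continuous unit normal.
  [phi,e3]-minimality: the mean curvature vector equals phi'(mu) eta N.\<close>
definition phi_minimal_surface ::
  "(real \<Rightarrow> real) \<Rightarrow> ('m::t2_space \<Rightarrow> real^3) \<Rightarrow> ('m \<Rightarrow> real^3) \<Rightarrow> bool" where
  "phi_minimal_surface \<phi> X N \<longleftrightarrow>
     connected (UNIV :: 'm set) \<and>
     continuous_on UNIV N \<and> (\<forall>p. norm (N p) = 1) \<and>
     (\<forall>p. \<exists>U V \<psi> \<psi>i. open U \<and> p \<in> U \<and> open V \<and> homeomorphism V U \<psi> \<psi>i \<and>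
         smooth2_on V (X \<circ> \<psi>) \<and>
         (\<forall>z\<in>V. immersion_at (X \<circ> \<psi>) z \<and>
                 N (\<psi> z) \<bullet> pd True (X \<circ> \<psi>) z = 0 \<and>
                 N (\<psi> z) \<bullet> pd False (X \<circ> \<psi>) z = 0 \<and>
                 meancurv (X \<circ> \<psi>) (N (\<psi> z)) z
                   = deriv \<phi> (X (\<psi> z) \<bullet> e3) * (N (\<psi> z) \<bullet> e3)))"

definition proper_map :: "('m::topological_space \<Rightarrow> real^3) \<Rightarrow> bool" where
  "proper_map X \<longleftrightarrow> (\<forall>K. compact K \<longrightarrow> compact (X -` K))"

end

theory Submission imports Defs begin

lemma orth3_zero:
  fixes w f1 f2 N :: "real^3"
  assumes "w \<bullet> f1 = 0" "w \<bullet> f2 = 0" "w \<bullet> N = 0" "N \<bullet> N = 1"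
    "N \<bullet> f1 = 0" "N \<bullet> f2 = 0"
    "(f1 \<bullet> f1) * (f2 \<bullet> f2) - (f1 \<bullet> f2)^2 \<noteq> 0"
  shows "w = 0"
proof -
  define c where "c = cross3 f1 f2"
  have cc: "c \<bullet> c = (f1 \<bullet> f1) * (f2 \<bullet> f2) - (f1 \<bullet> f2)^2"
    unfolding c_def dot_cross by (simp add: power2_eq_square inner_commute)
  have l1: "cross3 w c = 0" unfolding c_def Lagrange using assms by (simp add: inner_commute)
  have l2: "cross3 N c = 0" unfolding c_def Lagrange using assms by (simp add: inner_commute)
  have w: "(c \<bullet> c) *\<^sub>R w = (c \<bullet> w) *\<^sub>R c"
    using Lagrange[of c w c] l1 by (simp add: inner_commute)
  have n: "(c \<bullet> c) *\<^sub>R N = (c \<bullet> N) *\<^sub>R c"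
    using Lagrange[of c N c] l2 by (simp add: inner_commute)
  have "(c \<bullet> c) * (c \<bullet> c) = (c \<bullet> c) * (c \<bullet> c) * (N \<bullet> N)" using assms by simp
  also have "\<dots> = ((c \<bullet> c) *\<^sub>R N) \<bullet> ((c \<bullet> c) *\<^sub>R N)" by simp
  also have "\<dots> = (c \<bullet> N) * (c \<bullet> N) * (c \<bullet> c)" unfolding n by simp
  finally have "(c \<bullet> c) = (c \<bullet> N) * (c \<bullet> N)" using assms(7) cc by simp
  hence cN: "c \<bullet> N \<noteq> 0" using assms(7) cc by auto
  have "0 = ((c \<bullet> c) *\<^sub>R w) \<bullet> ((c \<bullet> c) *\<^sub>R N)" using assms(3) by (simp add: inner_commute)
  also have "\<dots> = (c \<bullet> w) * (c \<bullet> N) * (c \<bullet> c)" unfolding w n by simp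
  finally have "c \<bullet> w = 0" using cN assms(7) cc by simp
  then have "(c \<bullet> c) *\<^sub>R w = 0" using w by simp
  then show "w = 0" using assms(7) cc by simp
qed

lemma frame_identity:
  fixes x y f1 f2 N :: "real^3"
  defines "E \<equiv> f1 \<bullet> f1" and "F \<equiv> f1 \<bullet> f2" and "G \<equiv> f2 \<bullet> f2"
  assumes "N \<bullet> N = 1" "N \<bullet> f1 = 0" "N \<bullet> f2 = 0" "E * G - F^2 \<noteq> 0"
  shows "x \<bullet> y = (x \<bullet> N) * (y \<bullet> N) + (G * (x \<bullet> f1) * (y \<bullet> f1)
       - F * ((x \<bullet> f1) * (y \<bullet> f2) + (x \<bullet> f2) * (y \<bullet> f1)) + E * (x \<bullet> f2) * (y \<bullet> f2)) / (E * G - F^2)"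
proof -
  define D where "D = E * G - F^2"
  define c1 where "c1 = (G * (x \<bullet> f1) - F * (x \<bullet> f2)) / D"
  define c2 where "c2 = (E * (x \<bullet> f2) - F * (x \<bullet> f1)) / D"
  define w where "w = x - (x \<bullet> N) *\<^sub>R N - c1 *\<^sub>R f1 - c2 *\<^sub>R f2"
  have D: "D \<noteq> 0" using assms D_def by simp
  have "w \<bullet> f1 = x \<bullet> f1 - c1 * E - c2 * F"
    unfolding w_def E_def F_def G_def using assms by (simp add: inner_diff_left inner_diff_right inner_commute)
  also have "\<dots> = 0" unfolding c1_def c2_def using D unfolding D_def
    by (simp add: field_simps power2_eq_square)
  finally have w1: "w \<bullet> f1 = 0" .
  have "w \<bullet> f2 = x \<bullet> f2 - c1 * F - c2 * G"
    unfolding w_def E_def F_def G_def using assms by (simp add: inner_diff_left inner_diff_right inner_commute)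
  also have "\<dots> = 0" unfolding c1_def c2_def using D unfolding D_def
    by (simp add: field_simps power2_eq_square)
  finally have w2: "w \<bullet> f2 = 0" .
  have w3: "w \<bullet> N = 0"
    unfolding w_def E_def F_def G_def using assms by (simp add: inner_diff_left inner_diff_right inner_commute)
  have "w = 0" using orth3_zero[OF w1 w2 w3] assms unfolding E_def F_def G_def by simp
  hence x: "x = (x \<bullet> N) *\<^sub>R N + c1 *\<^sub>R f1 + c2 *\<^sub>R f2" unfolding w_def by (simp add: algebra_simps)
  have "x \<bullet> y = (x \<bullet> N) * (y \<bullet> N) + c1 * (y \<bullet> f1) + c2 * (y \<bullet> f2)"
    by (subst x) (simp add: inner_add_left inner_add_right inner_commute)
  also have "\<dots> = (x \<bullet> N) * (y \<bullet> N) + (G * (x \<bullet> f1) * (y \<bullet> f1)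
       - F * ((x \<bullet> f1) * (y \<bullet> f2) + (x \<bullet> f2) * (y \<bullet> f1)) + E * (x \<bullet> f2) * (y \<bullet> f2)) / (E * G - F^2)"
    unfolding c1_def c2_def D_def[symmetric] using D by (simp add: field_simps)
  finally show ?thesis .
qed

lemma pd_vd_True:
  assumes "pd_exists True g (u, v)"
  shows "((\<lambda>s. g (s, v)) has_vector_derivative pd True g (u, v)) (at u)"
  using assms unfolding pd_exists_def pd_def by (simp add: vector_derivative_works)

lemma pd_vd_False:
  assumes "pd_exists False g (u, v)"
  shows "((\<lambda>t. g (u, t)) has_vector_derivative pd False g (u, v)) (at v)"
  using assms unfolding pd_exists_def pd_def by (simp add: vector_derivative_works)

lemma frechet_from_partials:
  fixes g :: "real \<times> real \<Rightarrow> real^3"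
  assumes V: "open V" "z \<in> V"
    and ex: "\<And>z. z \<in> V \<Longrightarrow> pd_exists True g z \<and> pd_exists False g z"
    and cont: "continuous_on V (pd False g)"
  shows "(g has_derivative (\<lambda>h. fst h *\<^sub>R pd True g z + snd h *\<^sub>R pd False g z)) (at z)"
proof -
  obtain u v where z: "z = (u, v)" by (cases z)
  obtain A B where AB: "open A" "open B" "(u, v) \<in> A \<times> B" "A \<times> B \<subseteq> V"
    using open_prod_elim[OF V(1)] V(2) z by metis
  obtain r1 where r1: "r1 > 0" "ball u r1 \<subseteq> A" using AB(1) AB(3) openE[of A u] by auto
  obtain r2 where r2: "r2 > 0" "ball v r2 \<subseteq> B" using AB(2) AB(3) openE[of B v] by auto
  let ?X = "ball u r1" and ?Y = "ball v r2"
  have XY: "?X \<times> ?Y \<subseteq> V" using r1 r2 AB by auto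
  have oXY: "open (?X \<times> ?Y)" by (simp add: open_Times)
  have fx: "((\<lambda>x. g (x, v)) has_derivative (\<lambda>h. h *\<^sub>R pd True g (u, v))) (at u within ?X)"
    using pd_vd_True[of g u v] ex[of "(u,v)"] V(2) z
    unfolding has_vector_derivative_def by (auto intro: has_derivative_at_withinI)
  have fy: "((\<lambda>y. g (x, y)) has_derivative blinfun_apply (blinfun_scaleR_left (pd False g (x, y)))) (at y within ?Y)"
    if "x \<in> ?X" "y \<in> ?Y" for x y
  proof -
    have "(x, y) \<in> V" using XY that by auto
    then show ?thesis using pd_vd_False[of g x y] ex[of "(x,y)"]
      unfolding has_vector_derivative_def by (auto intro: has_derivative_at_withinI)
  qed
  have "isCont (pd False g) (u, v)"
    using cont V z continuous_on_eq_continuous_at by blast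
  hence "continuous (at (u, v) within ?X \<times> ?Y) (pd False g)"
    using continuous_at_imp_continuous_within by blast
  hence fyc: "continuous (at (u, v) within ?X \<times> ?Y) (\<lambda>(x, y). blinfun_scaleR_left (pd False g (x, y)))"
    using bounded_linear.continuous[OF bounded_linear_blinfun_scaleR_left] by (simp add: case_prod_beta')
  have "((\<lambda>(x, y). g (x, y)) has_derivative (\<lambda>(tx, ty). tx *\<^sub>R pd True g (u, v) + blinfun_apply (blinfun_scaleR_left (pd False g (u, v))) ty)) (at (u, v) within ?X \<times> ?Y)"
    by (rule has_derivative_partialsI[OF fx fy fyc]) (use r2 in auto)
  hence "(g has_derivative (\<lambda>(tx, ty). tx *\<^sub>R pd True g (u, v) + ty *\<^sub>R pd False g (u, v))) (at (u, v))"
    using at_within_open[OF _ oXY, of "(u,v)"] r1 r2 by simp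
  then show ?thesis unfolding z by (simp add: case_prod_beta')
qed

lemma vd_inner:
  fixes g :: "real \<Rightarrow> real^3"
  assumes "(g has_vector_derivative D) F"
  shows "((\<lambda>x. n \<bullet> g x) has_real_derivative (n \<bullet> D)) F"
proof -
  have "((\<lambda>x. n \<bullet> g x) has_derivative (\<lambda>h. n \<bullet> (h *\<^sub>R D))) F"
    using has_derivative_inner_right[OF assms[unfolded has_vector_derivative_def]] .
  moreover have "(\<lambda>h. n \<bullet> (h *\<^sub>R D)) = (*) (n \<bullet> D)" by (auto simp: mult.commute)
  ultimately show ?thesis unfolding has_field_derivative_def by simp
qed

lemma schwarz_inner:
  fixes f :: "real \<times> real \<Rightarrow> real^3"
  assumes V: "open V" "z \<in> V"
    and ex: "\<And>z. z \<in> V \<Longrightarrow> pd_exists True f z \<and> pd_exists False f z \<and>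
               pd_exists False (pd True f) z \<and> pd_exists True (pd False f) z"
    and c1: "continuous_on V (pd False (pd True f))"
    and c2: "continuous_on V (pd True (pd False f))"
  shows "n \<bullet> pd False (pd True f) z = n \<bullet> pd True (pd False f) z"
proof -
  obtain u v where z: "z = (u, v)" by (cases z)
  define a21 where "a21 = n \<bullet> pd False (pd True f) (u, v)"
  define a12 where "a12 = n \<bullet> pd True (pd False f) (u, v)"
  have "\<bar>a21 - a12\<bar> < 2 * e" if e: "e > 0" for e
  proof -
    have i1: "isCont (\<lambda>y. n \<bullet> pd False (pd True f) y) (u, v)"
      using c1 V z continuous_on_eq_continuous_at by (auto intro!: continuous_intros)
    have i2: "isCont (\<lambda>y. n \<bullet> pd True (pd False f) y) (u, v)"
      using c2 V z continuous_on_eq_continuous_at by (auto intro!: continuous_intros)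
    obtain d1 where d1: "d1 > 0" "\<And>y. dist y (u,v) < d1 \<Longrightarrow> \<bar>n \<bullet> pd False (pd True f) y - a21\<bar> < e"
      using i1[unfolded continuous_at_eps_delta] e unfolding a21_def dist_real_def by blast
    obtain d2 where d2: "d2 > 0" "\<And>y. dist y (u,v) < d2 \<Longrightarrow> \<bar>n \<bullet> pd True (pd False f) y - a12\<bar> < e"
      using i2[unfolded continuous_at_eps_delta] e unfolding a12_def dist_real_def by blast
    obtain d3 where d3: "d3 > 0" "ball (u,v) d3 \<subseteq> V" using V z openE by blast
    define h where "h = min d1 (min d2 d3) / 3"
    have h: "h > 0" using d1 d2 d3 h_def by simp
    have box: "dist (s, t) (u, v) < min d1 (min d2 d3)" if "u \<le> s" "s \<le> u + h" "v \<le> t" "t \<le> v + h" for s t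
    proof -
      have "dist (s, t) (u, v) \<le> \<bar>s - u\<bar> + \<bar>t - v\<bar>"
        unfolding dist_Pair_Pair dist_real_def using sqrt_sum_squares_le_sum_abs[of "\<bar>s - u\<bar>" "\<bar>t - v\<bar>"] by simp
      also have "\<dots> \<le> 2 * h" using that by simp
      also have "\<dots> < min d1 (min d2 d3)" using h d1(1) d2(1) d3(1) unfolding h_def by linarith
      finally show ?thesis .
    qed
    have inV: "(s, t) \<in> V" if "u \<le> s" "s \<le> u + h" "v \<le> t" "t \<le> v + h" for s t
      using box[OF that] d3 by (auto simp: dist_commute)
    define w where "w = (\<lambda>y. n \<bullet> f y)"
    define Dl where "Dl = w (u+h, v+h) - w (u+h, v) - w (u, v+h) + w (u, v)"
    have "\<exists>\<xi>. u < \<xi> \<and> \<xi> < u + h \<and>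
       (w (u+h, v+h) - w (u+h, v)) - (w (u, v+h) - w (u, v)) =
        ((u + h) - u) * (n \<bullet> pd True f (\<xi>, v+h) - n \<bullet> pd True f (\<xi>, v))"
      apply (rule MVT2[where f = "\<lambda>s. w (s, v+h) - w (s, v)"])
      using h apply simp
      unfolding w_def
      apply (intro DERIV_diff vd_inner pd_vd_True)
      using ex inV h by auto
    then obtain \<xi> where xi: "u < \<xi>" "\<xi> < u + h"
      "Dl = h * (n \<bullet> pd True f (\<xi>, v+h) - n \<bullet> pd True f (\<xi>, v))"
      unfolding Dl_def by (auto simp: algebra_simps)
    have "\<exists>\<eta>. v < \<eta> \<and> \<eta> < v + h \<and>
       n \<bullet> pd True f (\<xi>, v+h) - n \<bullet> pd True f (\<xi>, v) = ((v + h) - v) * (n \<bullet> pd False (pd True f) (\<xi>, \<eta>))"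
      apply (rule MVT2[where f = "\<lambda>t. n \<bullet> pd True f (\<xi>, t)"])
      using h apply simp
      apply (intro vd_inner pd_vd_False)
      using ex inV h xi by auto
    then obtain \<eta> where eta: "v < \<eta>" "\<eta> < v + h"
      "n \<bullet> pd True f (\<xi>, v+h) - n \<bullet> pd True f (\<xi>, v) = h * (n \<bullet> pd False (pd True f) (\<xi>, \<eta>))"
      by auto
    have "\<exists>\<eta>'. v < \<eta>' \<and> \<eta>' < v + h \<and>
       (w (u+h, v+h) - w (u, v+h)) - (w (u+h, v) - w (u, v)) =
        ((v + h) - v) * (n \<bullet> pd False f (u+h, \<eta>') - n \<bullet> pd False f (u, \<eta>'))"
      apply (rule MVT2[where f = "\<lambda>t. w (u+h, t) - w (u, t)"])
      using h apply simp
      unfolding w_def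
      apply (intro DERIV_diff vd_inner pd_vd_False)
      using ex inV h by auto
    then obtain \<eta>' where eta': "v < \<eta>'" "\<eta>' < v + h"
      "Dl = h * (n \<bullet> pd False f (u+h, \<eta>') - n \<bullet> pd False f (u, \<eta>'))"
      unfolding Dl_def by (auto simp: algebra_simps)
    have "\<exists>\<xi>'. u < \<xi>' \<and> \<xi>' < u + h \<and>
       n \<bullet> pd False f (u+h, \<eta>') - n \<bullet> pd False f (u, \<eta>') = ((u + h) - u) * (n \<bullet> pd True (pd False f) (\<xi>', \<eta>'))"
      apply (rule MVT2[where f = "\<lambda>s. n \<bullet> pd False f (s, \<eta>')"])
      using h apply simp
      apply (intro vd_inner pd_vd_True)
      using ex inV h eta' by auto
    then obtain \<xi>' where xi': "u < \<xi>'" "\<xi>' < u + h"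
      "n \<bullet> pd False f (u+h, \<eta>') - n \<bullet> pd False f (u, \<eta>') = h * (n \<bullet> pd True (pd False f) (\<xi>', \<eta>'))"
      by auto
    have "h * h * (n \<bullet> pd False (pd True f) (\<xi>, \<eta>)) = h * h * (n \<bullet> pd True (pd False f) (\<xi>', \<eta>'))"
      using xi(3) eta(3) eta'(3) xi'(3) by (metis mult.assoc)
    hence eq: "n \<bullet> pd False (pd True f) (\<xi>, \<eta>) = n \<bullet> pd True (pd False f) (\<xi>', \<eta>')"
      using h by simp
    have "\<bar>n \<bullet> pd False (pd True f) (\<xi>, \<eta>) - a21\<bar> < e"
      using d1(2) box[of \<xi> \<eta>] xi eta by simp
    moreover have "\<bar>n \<bullet> pd True (pd False f) (\<xi>', \<eta>') - a12\<bar> < e"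
      using d2(2) box[of \<xi>' \<eta>'] xi' eta' by simp
    ultimately show ?thesis using eq by linarith
  qed
  note H = this
  have "a21 = a12"
  proof (rule ccontr)
    assume "a21 \<noteq> a12"
    hence "\<bar>a21 - a12\<bar> / 2 > 0" by simp
    from H[OF this] show False by simp
  qed
  then show ?thesis unfolding z a21_def a12_def .
qed

lemma second_order_1d:
  fixes g g1 :: "real \<Rightarrow> real"
  assumes r: "r > 0" and mx: "\<And>t. \<bar>t\<bar> < r \<Longrightarrow> g t \<le> g 0"
    and dg: "\<And>t. \<bar>t\<bar> < r \<Longrightarrow> (g has_real_derivative g1 t) (at t)"
    and dg1: "(g1 has_real_derivative c) (at 0)"
  shows "g1 0 = 0" "c \<le> 0"
proof -
  show g10: "g1 0 = 0"
    by (rule DERIV_local_max[OF dg[of 0] r]) (use r mx in auto)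
  show "c \<le> 0"
  proof (rule ccontr)
    assume "\<not> c \<le> 0"
    hence "c > 0" by simp
    from DERIV_pos_inc_right[OF dg1 this] obtain d where d: "d > 0" "\<And>h. h > 0 \<Longrightarrow> h < d \<Longrightarrow> g1 0 < g1 (0 + h)"
      by blast
    define t where "t = min d r / 2"
    have t: "t > 0" "t < d" "t < r" using d r unfolding t_def by auto
    have "\<exists>\<xi>. 0 < \<xi> \<and> \<xi> < t \<and> g t - g 0 = (t - 0) * g1 \<xi>"
      by (rule MVT2) (use t dg in auto)
    then obtain \<xi> where xi: "0 < \<xi>" "\<xi> < t" "g t - g 0 = t * g1 \<xi>" by auto
    have "g1 \<xi> > 0" using d(2)[of \<xi>] xi t g10 by simp
    hence "g t - g 0 > 0" using xi t by simp
    moreover have "g t \<le> g 0" using mx[of t] t by simp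
    ultimately show False by simp
  qed
qed

lemma smooth2_onD:
  assumes "smooth2_on V f"
  shows "continuous_on V (pds bs f)" "z \<in> V \<Longrightarrow> pd_exists b (pds bs f) z"
  using assms unfolding smooth2_on_def by auto

lemma chart_second_order:
  fixes f :: "real \<times> real \<Rightarrow> real^3" and Ft :: "real^3 \<Rightarrow> real"
    and gF :: "real^3 \<Rightarrow> real^3" and HF :: "real^3 \<Rightarrow> real^3 \<Rightarrow> real^3"
  assumes V: "open V" "z0 \<in> V"
    and sm: "smooth2_on V f"
    and dF: "\<And>x. (Ft has_derivative (\<lambda>h. gF x \<bullet> h)) (at x)"
    and dG: "\<And>x. (gF has_derivative HF x) (at x)"
    and mx: "\<And>z. z \<in> V \<Longrightarrow> Ft (f z) \<le> Ft (f z0)"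
  shows "gF (f z0) \<bullet> (\<alpha> *\<^sub>R pd True f z0 + \<beta> *\<^sub>R pd False f z0) = 0"
    "HF (f z0) (\<alpha> *\<^sub>R pd True f z0 + \<beta> *\<^sub>R pd False f z0) \<bullet> (\<alpha> *\<^sub>R pd True f z0 + \<beta> *\<^sub>R pd False f z0)
     + gF (f z0) \<bullet> (\<alpha> *\<^sub>R (\<alpha> *\<^sub>R pd True (pd True f) z0 + \<beta> *\<^sub>R pd False (pd True f) z0)
                    + \<beta> *\<^sub>R (\<alpha> *\<^sub>R pd True (pd False f) z0 + \<beta> *\<^sub>R pd False (pd False f) z0)) \<le> 0"
proof -
  let ?f1 = "pd True f" and ?f2 = "pd False f"
  define d :: "real \<times> real" where "d = (\<alpha>, \<beta>)"
  define l where "l = (\<lambda>t::real. z0 + t *\<^sub>R d)"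
  obtain r0 where r0: "r0 > 0" "ball z0 r0 \<subseteq> V" using V openE by blast
  define r where "r = r0 / (norm d + 1)"
  have nd: "norm d + 1 > 0" by (smt (verit) norm_ge_zero)
  have r: "r > 0" unfolding r_def using r0 nd by simp
  have lV: "l t \<in> V" if "\<bar>t\<bar> < r" for t
  proof -
    have "norm (l t - z0) = \<bar>t\<bar> * norm d" unfolding l_def by simp
    also have "\<dots> \<le> \<bar>t\<bar> * (norm d + 1)" by (simp add: mult_left_mono)
    also have "\<dots> < r * (norm d + 1)" using that nd by (intro mult_strict_right_mono) auto
    also have "\<dots> = r0" unfolding r_def using nd by simp
    finally show ?thesis using r0 by (auto simp: dist_norm norm_minus_commute)
  qed
  have ex0: "\<And>z. z \<in> V \<Longrightarrow> pd_exists True f z \<and> pd_exists False f z"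
    using smooth2_onD(2)[OF sm, where bs="[]"] by simp
  have ex1: "\<And>z. z \<in> V \<Longrightarrow> pd_exists True ?f1 z \<and> pd_exists False ?f1 z"
    using smooth2_onD(2)[OF sm, where bs="[True]"] by simp
  have ex2: "\<And>z. z \<in> V \<Longrightarrow> pd_exists True ?f2 z \<and> pd_exists False ?f2 z"
    using smooth2_onD(2)[OF sm, where bs="[False]"] by simp
  have c0: "continuous_on V (pd False f)" using smooth2_onD(1)[OF sm, where bs="[False]"] by simp
  have c1: "continuous_on V (pd False ?f1)" using smooth2_onD(1)[OF sm, where bs="[False, True]"] by simp
  have c2: "continuous_on V (pd False ?f2)" using smooth2_onD(1)[OF sm, where bs="[False, False]"] by simp
  have Df: "(f has_derivative (\<lambda>h. fst h *\<^sub>R ?f1 z + snd h *\<^sub>R ?f2 z)) (at z)" if "z \<in> V" for z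
    by (rule frechet_from_partials[OF V(1) that ex0 c0])
  have Df1: "(?f1 has_derivative (\<lambda>h. fst h *\<^sub>R pd True ?f1 z0 + snd h *\<^sub>R pd False ?f1 z0)) (at z0)"
    by (rule frechet_from_partials[OF V ex1 c1])
  have Df2: "(?f2 has_derivative (\<lambda>h. fst h *\<^sub>R pd True ?f2 z0 + snd h *\<^sub>R pd False ?f2 z0)) (at z0)"
    by (rule frechet_from_partials[OF V ex2 c2])
  have dl: "(l has_derivative (\<lambda>h. h *\<^sub>R d)) (at t)" for t
    unfolding l_def by (auto intro!: derivative_eq_intros)
  define gp where "gp = (\<lambda>t. \<alpha> *\<^sub>R ?f1 (l t) + \<beta> *\<^sub>R ?f2 (l t))"
  have dgam: "((\<lambda>t. f (l t)) has_derivative (\<lambda>h. h *\<^sub>R gp t)) (at t)" if "\<bar>t\<bar> < r" for t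
  proof -
    have "((\<lambda>t. f (l t)) has_derivative (\<lambda>h. fst (h *\<^sub>R d) *\<^sub>R ?f1 (l t) + snd (h *\<^sub>R d) *\<^sub>R ?f2 (l t))) (at t)"
      by (rule has_derivative_compose[OF dl Df[OF lV[OF that]]])
    moreover have "(\<lambda>h. fst (h *\<^sub>R d) *\<^sub>R ?f1 (l t) + snd (h *\<^sub>R d) *\<^sub>R ?f2 (l t)) = (\<lambda>h. h *\<^sub>R gp t)"
      unfolding gp_def d_def by (auto simp: algebra_simps)
    ultimately show ?thesis by simp
  qed
  define g where "g = (\<lambda>t. Ft (f (l t)))"
  define g1 where "g1 = (\<lambda>t. gF (f (l t)) \<bullet> gp t)"
  have dg: "(g has_real_derivative g1 t) (at t)" if "\<bar>t\<bar> < r" for t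
  proof -
    have "(g has_derivative (\<lambda>h. gF (f (l t)) \<bullet> (h *\<^sub>R gp t))) (at t)"
      unfolding g_def by (rule has_derivative_compose[OF dgam[OF that] dF])
    moreover have "(\<lambda>h. gF (f (l t)) \<bullet> (h *\<^sub>R gp t)) = (*) (g1 t)"
      unfolding g1_def by (auto simp: mult.commute)
    ultimately show ?thesis unfolding has_field_derivative_def by simp
  qed
  have l0: "l 0 = z0" unfolding l_def by simp
  define v where "v = gp 0"
  define w where "w = \<alpha> *\<^sub>R (\<alpha> *\<^sub>R pd True (pd True f) z0 + \<beta> *\<^sub>R pd False (pd True f) z0)
                    + \<beta> *\<^sub>R (\<alpha> *\<^sub>R pd True (pd False f) z0 + \<beta> *\<^sub>R pd False (pd False f) z0)"
  have dgp: "(gp has_derivative (\<lambda>h. h *\<^sub>R w)) (at 0)"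
  proof -
    have a: "((\<lambda>t. ?f1 (l t)) has_derivative (\<lambda>h. fst (h *\<^sub>R d) *\<^sub>R pd True ?f1 z0 + snd (h *\<^sub>R d) *\<^sub>R pd False ?f1 z0)) (at 0)"
      by (rule has_derivative_compose[OF dl]) (simp add: l0 Df1)
    have b: "((\<lambda>t. ?f2 (l t)) has_derivative (\<lambda>h. fst (h *\<^sub>R d) *\<^sub>R pd True ?f2 z0 + snd (h *\<^sub>R d) *\<^sub>R pd False ?f2 z0)) (at 0)"
      by (rule has_derivative_compose[OF dl]) (simp add: l0 Df2)
    have "(gp has_derivative (\<lambda>h. \<alpha> *\<^sub>R (fst (h *\<^sub>R d) *\<^sub>R pd True ?f1 z0 + snd (h *\<^sub>R d) *\<^sub>R pd False ?f1 z0)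
        + \<beta> *\<^sub>R (fst (h *\<^sub>R d) *\<^sub>R pd True ?f2 z0 + snd (h *\<^sub>R d) *\<^sub>R pd False ?f2 z0))) (at 0)"
      unfolding gp_def by (intro has_derivative_add has_derivative_scaleR_right a b)
    moreover have "(\<lambda>h. \<alpha> *\<^sub>R (fst (h *\<^sub>R d) *\<^sub>R pd True ?f1 z0 + snd (h *\<^sub>R d) *\<^sub>R pd False ?f1 z0)
        + \<beta> *\<^sub>R (fst (h *\<^sub>R d) *\<^sub>R pd True ?f2 z0 + snd (h *\<^sub>R d) *\<^sub>R pd False ?f2 z0)) = (\<lambda>h. h *\<^sub>R w)"
      unfolding w_def d_def by (auto simp: algebra_simps)
    ultimately show ?thesis by simp
  qed
  have dgF: "((\<lambda>t. gF (f (l t))) has_derivative (\<lambda>h. HF (f z0) (h *\<^sub>R v))) (at 0)"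
    using has_derivative_compose[OF dgam[of 0] dG] r l0 unfolding v_def by simp
  have dg1: "(g1 has_real_derivative (HF (f z0) v \<bullet> v + gF (f z0) \<bullet> w)) (at 0)"
  proof -
    have "(g1 has_derivative (\<lambda>h. gF (f (l 0)) \<bullet> (h *\<^sub>R w) + HF (f z0) (h *\<^sub>R v) \<bullet> gp 0)) (at 0)"
      unfolding g1_def by (rule has_derivative_inner[OF dgF dgp])
    moreover have "linear (HF (f z0))" using dG has_derivative_linear by blast
    ultimately have "(g1 has_derivative (\<lambda>h. h * (gF (f z0) \<bullet> w + HF (f z0) v \<bullet> v))) (at 0)"
      unfolding v_def l0 by (simp add: linear_scale distrib_left)
    moreover have "(\<lambda>h. h * (gF (f z0) \<bullet> w + HF (f z0) v \<bullet> v)) = (*) (HF (f z0) v \<bullet> v + gF (f z0) \<bullet> w)"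
      by (auto simp: algebra_simps)
    ultimately show ?thesis unfolding has_field_derivative_def by simp
  qed
  have mx': "g t \<le> g 0" if "\<bar>t\<bar> < r" for t
    unfolding g_def l0 using mx[OF lV[OF that]] .
  have so: "g1 0 = 0" "HF (f z0) v \<bullet> v + gF (f z0) \<bullet> w \<le> 0"
    using second_order_1d[OF r mx' dg dg1] by auto
  show "gF (f z0) \<bullet> (\<alpha> *\<^sub>R pd True f z0 + \<beta> *\<^sub>R pd False f z0) = 0"
    using so(1) unfolding g1_def gp_def l0 .
  show "HF (f z0) (\<alpha> *\<^sub>R pd True f z0 + \<beta> *\<^sub>R pd False f z0) \<bullet> (\<alpha> *\<^sub>R pd True f z0 + \<beta> *\<^sub>R pd False f z0)
     + gF (f z0) \<bullet> (\<alpha> *\<^sub>R (\<alpha> *\<^sub>R pd True (pd True f) z0 + \<beta> *\<^sub>R pd False (pd True f) z0)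
                    + \<beta> *\<^sub>R (\<alpha> *\<^sub>R pd True (pd False f) z0 + \<beta> *\<^sub>R pd False (pd False f) z0)) \<le> 0"
    using so(2) unfolding v_def w_def gp_def l0 .
qed

lemma key_contra:
  fixes f1 f2 N f11 f12 f21 f22 x a1 a2 :: "real^3"
    and \<kappa> \<mu> e1 e2 m \<delta> phid :: real and n :: "real^3" and HFv :: "real^3 \<Rightarrow> real^3"
  defines "E \<equiv> f1 \<bullet> f1" and "F \<equiv> f1 \<bullet> f2" and "G \<equiv> f2 \<bullet> f2"
  assumes n_def: "n = (1 + e1) *\<^sub>R a1 + (1 + e2) *\<^sub>R a2 - \<kappa> *\<^sub>R x"
  assumes HFv_def: "\<And>v. HFv v = (e1 * (a1 \<bullet> v)) *\<^sub>R a1 + (e2 * (a2 \<bullet> v)) *\<^sub>R a2 - \<kappa> *\<^sub>R v + (\<mu> * (x \<bullet> v)) *\<^sub>R x"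
  assumes fr: "N \<bullet> N = 1" "N \<bullet> f1 = 0" "N \<bullet> f2 = 0" "E * G - F^2 \<noteq> 0"
    and first: "n \<bullet> f1 = 0" "n \<bullet> f2 = 0"
    and second: "\<And>\<alpha> \<beta>. HFv (\<alpha> *\<^sub>R f1 + \<beta> *\<^sub>R f2) \<bullet> (\<alpha> *\<^sub>R f1 + \<beta> *\<^sub>R f2)
        + n \<bullet> (\<alpha> *\<^sub>R (\<alpha> *\<^sub>R f11 + \<beta> *\<^sub>R f21) + \<beta> *\<^sub>R (\<alpha> *\<^sub>R f12 + \<beta> *\<^sub>R f22)) \<le> 0"
    and schwarz: "n \<bullet> f21 = n \<bullet> f12"
    and mc: "(G * (f11 \<bullet> N) - 2 * F * (f12 \<bullet> N) + E * (f22 \<bullet> N)) / (E * G - F^2) = phid * (N \<bullet> e3)"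
    and ae: "a1 \<bullet> e3 = 0" "a2 \<bullet> e3 = 0"
    and pos: "e1 \<ge> m" "e2 \<ge> m" "m > 0" "\<mu> \<ge> 0"
    and delta: "(a1 \<bullet> a1 - (a1 \<bullet> N)^2) + (a2 \<bullet> a2 - (a2 \<bullet> N)^2) \<ge> \<delta>"
    and small: "2 * \<kappa> + \<bar>\<kappa> * (x \<bullet> e3) * phid\<bar> < m * \<delta>"
  shows False
proof -
  define D where "D = E * G - F^2"
  have D0: "D \<noteq> 0" using fr D_def by simp
  have Gpos: "G > 0"
  proof -
    have "G \<ge> 0" unfolding G_def by simp
    moreover have "G \<noteq> 0"
    proof
      assume "G = 0"
      hence "f2 = 0" unfolding G_def by simp
      thus False using fr(4) unfolding E_def F_def G_def by simp
    qed
    ultimately show ?thesis by simp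
  qed
  have Dpos: "D > 0"
  proof -
    have "F^2 \<le> E * G" unfolding E_def F_def G_def by (rule Cauchy_Schwarz_ineq)
    thus ?thesis using D0 D_def by simp
  qed
  have FI: "y \<bullet> z = (y \<bullet> N) * (z \<bullet> N) + (G * (y \<bullet> f1) * (z \<bullet> f1)
       - F * ((y \<bullet> f1) * (z \<bullet> f2) + (y \<bullet> f2) * (z \<bullet> f1)) + E * (y \<bullet> f2) * (z \<bullet> f2)) / D" for y z
    unfolding D_def E_def F_def G_def
    by (rule frame_identity[OF fr(1-3)]) (use fr(4) in \<open>simp add: E_def F_def G_def\<close>)
  define P where "P = (\<lambda>a. a \<bullet> a - (a \<bullet> N)^2)"
  have Pnn: "P a \<ge> 0" for a
    using Cauchy_Schwarz_ineq[of a N] fr(1) unfolding P_def by simp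
  have quad: "(a \<bullet> (G *\<^sub>R f1 - F *\<^sub>R f2))^2 + D * (a \<bullet> f2)^2 = G * D * P a" for a
  proof -
    have "P a = (G * (a \<bullet> f1) * (a \<bullet> f1) - F * ((a \<bullet> f1) * (a \<bullet> f2) + (a \<bullet> f2) * (a \<bullet> f1))
           + E * (a \<bullet> f2) * (a \<bullet> f2)) / D"
      unfolding P_def using FI[of a a] by (simp add: power2_eq_square)
    hence "G * D * P a = G * (G * (a \<bullet> f1) * (a \<bullet> f1) - F * ((a \<bullet> f1) * (a \<bullet> f2) + (a \<bullet> f2) * (a \<bullet> f1))
           + E * (a \<bullet> f2) * (a \<bullet> f2))" using D0 by simp
    thus ?thesis unfolding D_def by (simp add: inner_diff_right power2_eq_square algebra_simps)
  qed
  have vv: "(G *\<^sub>R f1 - F *\<^sub>R f2) \<bullet> (G *\<^sub>R f1 - F *\<^sub>R f2) + D * (f2 \<bullet> f2) = 2 * G * D"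
    unfolding D_def E_def F_def G_def by (simp add: inner_diff_right inner_diff_left inner_commute power2_eq_square algebra_simps)
  define lam where "lam = n \<bullet> N"
  have nN: "n \<bullet> y = lam * (y \<bullet> N)" for y
    using FI[of n y] first unfolding lam_def by simp
  have ne3: "n \<bullet> e3 = - \<kappa> * (x \<bullet> e3)"
    unfolding n_def using ae by (simp add: inner_diff_left inner_add_left)
  have lamH: "lam * (phid * (N \<bullet> e3)) = - \<kappa> * (x \<bullet> e3) * phid"
    using nN[of e3] ne3 by (simp add: algebra_simps inner_commute)
  have Kexp: "HFv v \<bullet> v = e1 * (a1 \<bullet> v)^2 + e2 * (a2 \<bullet> v)^2 - \<kappa> * (v \<bullet> v) + \<mu> * (x \<bullet> v)^2" for v
    unfolding HFv_def by (simp add: inner_diff_left inner_add_left inner_diff_right inner_add_right inner_commute power2_eq_square)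
  have K1: "HFv (G *\<^sub>R f1 - F *\<^sub>R f2) \<bullet> (G *\<^sub>R f1 - F *\<^sub>R f2)
     + (G * G * (n \<bullet> f11) - 2 * G * F * (n \<bullet> f12) + F * F * (n \<bullet> f22)) \<le> 0"
    using second[of G "-F"] schwarz by (simp add: inner_add_right inner_diff_right algebra_simps)
  have K2: "HFv f2 \<bullet> f2 + n \<bullet> f22 \<le> 0"
    using second[of 0 1] by simp
  define S where "S = HFv (G *\<^sub>R f1 - F *\<^sub>R f2) \<bullet> (G *\<^sub>R f1 - F *\<^sub>R f2)
     + (G * G * (n \<bullet> f11) - 2 * G * F * (n \<bullet> f12) + F * F * (n \<bullet> f22)) + D * (HFv f2 \<bullet> f2 + n \<bullet> f22)"
  have S0: "S \<le> 0" unfolding S_def using K1 K2 Dpos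
    by (smt (verit) mult_nonneg_nonneg mult_le_0_iff)
  have nsum: "G * G * (n \<bullet> f11) - 2 * G * F * (n \<bullet> f12) + F * F * (n \<bullet> f22) + D * (n \<bullet> f22)
      = G * D * (lam * (phid * (N \<bullet> e3)))"
  proof -
    have "G * (f11 \<bullet> N) - 2 * F * (f12 \<bullet> N) + E * (f22 \<bullet> N) = D * (phid * (N \<bullet> e3))"
      using mc D0 unfolding D_def by (simp add: field_simps)
    moreover have "G * G * (n \<bullet> f11) - 2 * G * F * (n \<bullet> f12) + F * F * (n \<bullet> f22) + D * (n \<bullet> f22)
       = G * lam * (G * (f11 \<bullet> N) - 2 * F * (f12 \<bullet> N) + E * (f22 \<bullet> N))"
      unfolding nN D_def by (simp add: algebra_simps power2_eq_square)
    ultimately show ?thesis by simp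
  qed
  have "S = e1 * ((a1 \<bullet> (G *\<^sub>R f1 - F *\<^sub>R f2))^2 + D * (a1 \<bullet> f2)^2)
          + e2 * ((a2 \<bullet> (G *\<^sub>R f1 - F *\<^sub>R f2))^2 + D * (a2 \<bullet> f2)^2)
          - \<kappa> * ((G *\<^sub>R f1 - F *\<^sub>R f2) \<bullet> (G *\<^sub>R f1 - F *\<^sub>R f2) + D * (f2 \<bullet> f2))
          + \<mu> * ((x \<bullet> (G *\<^sub>R f1 - F *\<^sub>R f2))^2 + D * (x \<bullet> f2)^2)
          + (G * G * (n \<bullet> f11) - 2 * G * F * (n \<bullet> f12) + F * F * (n \<bullet> f22) + D * (n \<bullet> f22))"
    unfolding S_def Kexp by (simp add: algebra_simps)
  also have "\<dots> = G * D * (e1 * P a1 + e2 * P a2 - 2 * \<kappa> + \<mu> * P x + lam * (phid * (N \<bullet> e3)))"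
    unfolding quad vv nsum by (simp add: algebra_simps)
  finally have "G * D * (e1 * P a1 + e2 * P a2 - 2 * \<kappa> + \<mu> * P x + lam * (phid * (N \<bullet> e3))) \<le> 0"
    using S0 by simp
  hence br: "e1 * P a1 + e2 * P a2 - 2 * \<kappa> + \<mu> * P x + lam * (phid * (N \<bullet> e3)) \<le> 0"
    using Gpos Dpos by (simp add: mult_le_0_iff zero_less_mult_iff)
  have "e1 * P a1 + e2 * P a2 \<ge> m * P a1 + m * P a2"
    using pos Pnn by (intro add_mono mult_right_mono) auto
  moreover have "m * P a1 + m * P a2 \<ge> m * \<delta>" using delta pos unfolding P_def
    by (simp add: distrib_left[symmetric])
  moreover have "\<mu> * P x \<ge> 0" using pos Pnn by simp
  ultimately show False using br lamH small by linarith
qed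

definition Ftest :: "real^3 \<Rightarrow> real^3 \<Rightarrow> real \<Rightarrow> real^3 \<Rightarrow> real" where
  "Ftest a1 a2 \<epsilon> x = (a1 \<bullet> x) + (a2 \<bullet> x) + exp (a1 \<bullet> x) + exp (a2 \<bullet> x) - \<epsilon> * ln (1 + x \<bullet> x)"
definition gtest :: "real^3 \<Rightarrow> real^3 \<Rightarrow> real \<Rightarrow> real^3 \<Rightarrow> real^3" where
  "gtest a1 a2 \<epsilon> x = (1 + exp (a1 \<bullet> x)) *\<^sub>R a1 + (1 + exp (a2 \<bullet> x)) *\<^sub>R a2 - (2 * \<epsilon> / (1 + x \<bullet> x)) *\<^sub>R x"
definition Htest :: "real^3 \<Rightarrow> real^3 \<Rightarrow> real \<Rightarrow> real^3 \<Rightarrow> real^3 \<Rightarrow> real^3" where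
  "Htest a1 a2 \<epsilon> x h = (exp (a1 \<bullet> x) * (a1 \<bullet> h)) *\<^sub>R a1 + (exp (a2 \<bullet> x) * (a2 \<bullet> h)) *\<^sub>R a2
      - (2 * \<epsilon> / (1 + x \<bullet> x)) *\<^sub>R h + ((4 * \<epsilon> / (1 + x \<bullet> x)^2) * (x \<bullet> h)) *\<^sub>R x"

lemma one_plus_inner_pos: "1 + x \<bullet> x > (0::real)" for x :: "real^3"
  by (smt (verit) inner_ge_zero)

lemma Ftest_deriv: "(Ftest a1 a2 \<epsilon> has_derivative (\<lambda>h. gtest a1 a2 \<epsilon> x \<bullet> h)) (at x)"
proof -
  have pos: "1 + x \<bullet> x > 0" by (rule one_plus_inner_pos)
  hence pos': "1 + x \<bullet> x \<noteq> 0" by simp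
  show ?thesis
    unfolding Ftest_def[abs_def]
    apply (rule has_derivative_eq_rhs)
     apply (rule derivative_eq_intros | simp add: pos pos')+
    using pos unfolding gtest_def
    by (intro ext) (simp add: inner_add_right inner_diff_right inner_commute field_simps)
qed

lemma gtest_deriv: "(gtest a1 a2 \<epsilon> has_derivative Htest a1 a2 \<epsilon> x) (at x)"
proof -
  have pos: "1 + x \<bullet> x > 0" by (rule one_plus_inner_pos)
  hence pos': "1 + x \<bullet> x \<noteq> 0" by simp
  show ?thesis
    unfolding gtest_def[abs_def]
    apply (rule has_derivative_eq_rhs)
     apply (rule derivative_eq_intros | simp add: pos pos')+
    using pos unfolding Htest_def
    by (intro ext) (simp add: inner_commute field_simps power2_eq_square algebra_simps)
qed

lemma unit_eq_proj:
  fixes a N :: "real^3"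
  assumes "N \<bullet> N = 1" "a \<bullet> a - (a \<bullet> N)^2 = 0"
  shows "a = (a \<bullet> N) *\<^sub>R N"
proof -
  have "(a - (a \<bullet> N) *\<^sub>R N) \<bullet> (a - (a \<bullet> N) *\<^sub>R N) = a \<bullet> a - (a \<bullet> N)^2"
    using assms(1) by (simp add: inner_diff_left inner_diff_right inner_commute power2_eq_square)
  then show ?thesis using assms(2) by simp
qed

lemma delta_exists:
  fixes a1 a2 :: "real^3"
  assumes a2: "a2 \<noteq> 0" and np: "\<not> (\<exists>c. a1 = c *\<^sub>R a2)"
  obtains \<delta> where "\<delta> > 0" "\<And>N. norm N = 1 \<Longrightarrow> \<delta> \<le> (a1 \<bullet> a1 - (a1 \<bullet> N)^2) + (a2 \<bullet> a2 - (a2 \<bullet> N)^2)"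
proof -
  define Pf where "Pf = (\<lambda>N::real^3. (a1 \<bullet> a1 - (a1 \<bullet> N)^2) + (a2 \<bullet> a2 - (a2 \<bullet> N)^2))"
  have cont: "continuous_on (sphere 0 1) Pf" unfolding Pf_def by (intro continuous_intros)
  have ne: "sphere (0::real^3) 1 \<noteq> {}" by (simp add: sphere_def) (metis norm_axis_1 dist_0_norm)
  obtain N0 where N0: "N0 \<in> sphere 0 1" "\<And>N. N \<in> sphere 0 1 \<Longrightarrow> Pf N0 \<le> Pf N"
    using continuous_attains_inf[OF compact_sphere ne cont] by blast
  have nN0: "N0 \<bullet> N0 = 1" using N0(1) by (simp add: dot_square_norm)
  have t1: "a1 \<bullet> a1 - (a1 \<bullet> N0)^2 \<ge> 0" using Cauchy_Schwarz_ineq[of a1 N0] nN0 by simp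
  have t2: "a2 \<bullet> a2 - (a2 \<bullet> N0)^2 \<ge> 0" using Cauchy_Schwarz_ineq[of a2 N0] nN0 by simp
  have "Pf N0 \<noteq> 0"
  proof
    assume "Pf N0 = 0"
    hence z1: "a1 \<bullet> a1 - (a1 \<bullet> N0)^2 = 0" and z2: "a2 \<bullet> a2 - (a2 \<bullet> N0)^2 = 0"
      using t1 t2 unfolding Pf_def by linarith+
    have e1: "a1 = (a1 \<bullet> N0) *\<^sub>R N0" by (rule unit_eq_proj[OF nN0 z1])
    have e2: "a2 = (a2 \<bullet> N0) *\<^sub>R N0" by (rule unit_eq_proj[OF nN0 z2])
    have nz: "a2 \<bullet> N0 \<noteq> 0" using e2 a2 by (metis scale_zero_left)
    have "a1 = ((a1 \<bullet> N0) / (a2 \<bullet> N0)) *\<^sub>R a2"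
      using nz by (subst e2) (simp add: e1[symmetric])
    thus False using np by blast
  qed
  hence "Pf N0 > 0" using t1 t2 unfolding Pf_def by linarith
  moreover have "\<And>N. norm N = 1 \<Longrightarrow> Pf N0 \<le> (a1 \<bullet> a1 - (a1 \<bullet> N)^2) + (a2 \<bullet> a2 - (a2 \<bullet> N)^2)"
    using N0(2) unfolding Pf_def by simp
  ultimately show ?thesis using that by blast
qed

lemma small_bound:
  fixes \<epsilon> C xx z phid m \<delta> :: real
  assumes "\<epsilon> > 0" "C > 0" "\<bar>phid\<bar> \<le> C * (1 + \<bar>z\<bar>)" "z^2 \<le> xx" "xx \<ge> 0"
    "\<epsilon> \<le> m * \<delta> / (8 * (1 + C))" "m * \<delta> > 0"
  shows "2 * (2 * \<epsilon> / (1 + xx)) + \<bar>(2 * \<epsilon> / (1 + xx)) * z * phid\<bar> < m * \<delta>"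
proof -
  define \<kappa> where "\<kappa> = 2 * \<epsilon> / (1 + xx)"
  have k0: "\<kappa> \<ge> 0" unfolding \<kappa>_def using assms by simp
  have k1: "\<kappa> * (1 + xx) = 2 * \<epsilon>" unfolding \<kappa>_def using assms by simp
  have k3: "0 \<le> \<kappa> * xx" using k0 assms(5) by simp
  have k4: "\<kappa> + \<kappa> * xx = 2 * \<epsilon>" using k1 by (simp add: distrib_left)
  have k2: "\<kappa> \<le> 2 * \<epsilon>" using k3 k4 by linarith
  have "\<bar>\<kappa> * z * phid\<bar> = \<kappa> * \<bar>z\<bar> * \<bar>phid\<bar>" using k0 by (simp add: abs_mult)
  also have "\<dots> \<le> \<kappa> * \<bar>z\<bar> * (C * (1 + \<bar>z\<bar>))" using k0 assms(3) by (simp add: mult_left_mono)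
  also have "\<dots> = C * (\<kappa> * (\<bar>z\<bar> + z^2))" by (simp add: algebra_simps power2_eq_square)
  also have "\<dots> \<le> C * (\<kappa> * (2 * (1 + xx)))"
  proof -
    have sq: "0 \<le> (\<bar>z\<bar> - 1)^2" by simp
    have "(\<bar>z\<bar> - 1)^2 = z^2 - 2 * \<bar>z\<bar> + 1"
      by (simp add: power2_eq_square algebra_simps abs_mult_self_eq)
    hence "\<bar>z\<bar> \<le> 1 + z^2" using sq abs_ge_zero[of z] by linarith
    hence "\<bar>z\<bar> + z^2 \<le> 2 * (1 + xx)" using assms(4) by (smt (verit))
    thus ?thesis using k0 assms(2) by (simp add: mult_left_mono)
  qed
  also have "\<dots> = 2 * C * (\<kappa> * (1 + xx))" by (simp add: algebra_simps)
  also have "\<dots> = 4 * C * \<epsilon>" unfolding k1 by simp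
  finally have "\<bar>\<kappa> * z * phid\<bar> \<le> 4 * C * \<epsilon>" .
  moreover have "4 * \<epsilon> * (1 + C) \<le> m * \<delta> / 2"
  proof -
    have "\<epsilon> * (8 * (1 + C)) \<le> m * \<delta>" using assms(6) assms(2) by (simp add: pos_le_divide_eq)
    thus ?thesis by (simp add: algebra_simps)
  qed
  ultimately have "2 * \<kappa> + \<bar>\<kappa> * z * phid\<bar> \<le> m * \<delta> / 2" using k2 by (simp add: algebra_simps)
  then show ?thesis unfolding \<kappa>_def using assms(7) by simp
qed

theorem theoremB:
  fixes \<phi> :: "real \<Rightarrow> real"
    and X :: "'m::t2_space \<Rightarrow> real^3"
    and N :: "'m \<Rightarrow> real^3"
    and a1 a2 :: "real^3" and b1 b2 :: real
  assumes smooth: "\<forall>n x. ((deriv ^^ n) \<phi>) differentiable (at x)"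
    and growth: "\<exists>C>0. \<forall>t. \<bar>deriv \<phi> t\<bar> \<le> C * (1 + \<bar>t\<bar>)"
    and surf: "phi_minimal_surface \<phi> X N"
    and proper: "proper_map X"
    and a1: "a1 \<noteq> 0" "a1 \<bullet> e3 = 0"
    and a2: "a2 \<noteq> 0" "a2 \<bullet> e3 = 0"
    and nonpar: "\<not> (\<exists>c. a1 = c *\<^sub>R a2)"
  shows "\<not> (range X \<subseteq> {x. a1 \<bullet> x \<le> b1} \<inter> {x. a2 \<bullet> x \<le> b2})"
proof
  assume W: "range X \<subseteq> {x. a1 \<bullet> x \<le> b1} \<inter> {x. a2 \<bullet> x \<le> b2}"
  have W1: "a1 \<bullet> X q \<le> b1" and W2: "a2 \<bullet> X q \<le> b2" for q using W by auto
  obtain C where C: "C > 0" "\<And>t. \<bar>deriv \<phi> t\<bar> \<le> C * (1 + \<bar>t\<bar>)" using growth by blast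
  obtain \<delta> where \<delta>: "\<delta> > 0" "\<And>N. norm N = 1 \<Longrightarrow> \<delta> \<le> (a1 \<bullet> a1 - (a1 \<bullet> N)^2) + (a2 \<bullet> a2 - (a2 \<bullet> N)^2)"
    using delta_exists[OF a2(1) nonpar] by blast
  have normN: "\<And>p. norm (N p) = 1" using surf unfolding phi_minimal_surface_def by blast
  have charts: "\<And>p. \<exists>U V \<psi> \<psi>i. open U \<and> p \<in> U \<and> open V \<and> homeomorphism V U \<psi> \<psi>i \<and>
         smooth2_on V (X \<circ> \<psi>) \<and>
         (\<forall>z\<in>V. immersion_at (X \<circ> \<psi>) z \<and>
                 N (\<psi> z) \<bullet> pd True (X \<circ> \<psi>) z = 0 \<and>
                 N (\<psi> z) \<bullet> pd False (X \<circ> \<psi>) z = 0 \<and>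
                 meancurv (X \<circ> \<psi>) (N (\<psi> z)) z
                   = deriv \<phi> (X (\<psi> z) \<bullet> e3) * (N (\<psi> z) \<bullet> e3))"
    using surf unfolding phi_minimal_surface_def by blast
  have contX: "continuous_on UNIV X"
  proof (rule continuous_at_imp_continuous_on, intro ballI)
    fix p
    obtain U V \<psi> \<psi>i where ch: "open U" "p \<in> U" "open V" "homeomorphism V U \<psi> \<psi>i" "smooth2_on V (X \<circ> \<psi>)"
      using charts[of p] by blast
    have hm: "\<forall>x\<in>V. \<psi>i (\<psi> x) = x" "\<psi> ` V = U" "continuous_on V \<psi>" "\<forall>y\<in>U. \<psi> (\<psi>i y) = y"
      "\<psi>i ` U = V" "continuous_on U \<psi>i"
      using ch(4) unfolding homeomorphism_def by auto
    have cf: "continuous_on V (X \<circ> \<psi>)" using smooth2_onD(1)[OF ch(5), where bs="[]"] by simp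
    have "continuous_on U ((X \<circ> \<psi>) \<circ> \<psi>i)"
      by (rule continuous_on_compose) (use hm cf in auto)
    hence "continuous_on U X"
      by (rule continuous_on_eq) (use hm in auto)
    thus "isCont X p" using ch(1,2) continuous_on_eq_continuous_at by blast
  qed
  define \<Phi> where "\<Phi> = (\<lambda>x::real^3. (a1 \<bullet> x) + (a2 \<bullet> x) + exp (a1 \<bullet> x) + exp (a2 \<bullet> x))"
  define p0 :: 'm where "p0 = undefined"
  define L where "L = \<Phi> (X p0) - 1 - \<bar>b1\<bar> - \<bar>b2\<bar> - exp b1 - exp b2"
  define m where "m = exp L"
  have m0: "m > 0" unfolding m_def by simp
  define \<epsilon> where "\<epsilon> = min (1 / (1 + ln (1 + X p0 \<bullet> X p0))) (m * \<delta> / (8 * (1 + C)))"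
  have ln0: "ln (1 + x \<bullet> x) \<ge> 0" for x :: "real^3" by simp
  have \<epsilon>0: "\<epsilon> > 0" unfolding \<epsilon>_def using m0 \<delta> C ln0[of "X p0"] by (simp add: add_pos_nonneg)
  define Ft where "Ft = Ftest a1 a2 \<epsilon>"
  have Ft_eq: "Ft x = \<Phi> x - \<epsilon> * ln (1 + x \<bullet> x)" for x unfolding Ft_def Ftest_def \<Phi>_def by simp
  define B where "B = b1 + b2 + exp b1 + exp b2"
  have PhiB: "\<Phi> (X q) \<le> B" for q unfolding \<Phi>_def B_def using W1[of q] W2[of q] by (intro add_mono) auto
  define c0 where "c0 = Ft (X p0)"
  define S where "S = {q. c0 \<le> Ft (X q)}"
  have contFt: "continuous_on UNIV Ft"
    unfolding Ft_def by (intro continuous_at_imp_continuous_on ballI has_derivative_continuous[OF Ftest_deriv])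
  have contFX: "continuous_on UNIV (\<lambda>q. Ft (X q))"
    using continuous_on_compose[OF contX, of Ft] continuous_on_subset[OF contFt] by (simp add: o_def)
  have clS: "closed S" unfolding S_def by (rule closed_Collect_le) (use contFX in auto)
  define R where "R = sqrt (exp ((B - c0) / \<epsilon>))"
  have SR: "S \<subseteq> X -` cball 0 R"
  proof
    fix q assume "q \<in> S"
    hence "c0 \<le> \<Phi> (X q) - \<epsilon> * ln (1 + X q \<bullet> X q)" unfolding S_def Ft_eq by simp
    hence "\<epsilon> * ln (1 + X q \<bullet> X q) \<le> B - c0" using PhiB[of q] by simp
    hence "ln (1 + X q \<bullet> X q) \<le> (B - c0) / \<epsilon>" using \<epsilon>0 by (simp add: field_simps)
    hence "1 + X q \<bullet> X q \<le> exp ((B - c0) / \<epsilon>)"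
      by (metis exp_le_cancel_iff exp_ln one_plus_inner_pos)
    hence "(norm (X q))^2 \<le> exp ((B - c0) / \<epsilon>)" by (simp add: power2_norm_eq_inner)
    hence "norm (X q) \<le> R" unfolding R_def by (simp add: real_le_rsqrt)
    thus "q \<in> X -` cball 0 R" by simp
  qed
  have cpS: "compact S"
  proof -
    have "compact (X -` cball 0 R)" using proper unfolding proper_map_def by simp
    hence "compact (X -` cball 0 R \<inter> S)" using clS by blast
    moreover have "X -` cball 0 R \<inter> S = S" using SR by blast
    ultimately show ?thesis by simp
  qed
  have p0S: "p0 \<in> S" unfolding S_def c0_def by simp
  obtain p where pS: "p \<in> S" and pmaxS: "\<And>q. q \<in> S \<Longrightarrow> Ft (X q) \<le> Ft (X p)"
    using continuous_attains_sup[OF cpS _ continuous_on_subset[OF contFX]] p0S by blast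
  have pmax: "Ft (X q) \<le> Ft (X p)" for q
  proof (cases "q \<in> S")
    case True then show ?thesis by (rule pmaxS)
  next
    case False then show ?thesis using pS unfolding S_def by simp
  qed
  have "\<epsilon> * ln (1 + X p0 \<bullet> X p0) \<le> 1"
  proof -
    have "\<epsilon> \<le> 1 / (1 + ln (1 + X p0 \<bullet> X p0))" unfolding \<epsilon>_def by simp
    hence "\<epsilon> * (1 + ln (1 + X p0 \<bullet> X p0)) \<le> 1"
      using ln0[of "X p0"] by (simp add: pos_le_divide_eq add_pos_nonneg)
    thus ?thesis using \<epsilon>0 by (simp add: distrib_left)
  qed
  hence "\<Phi> (X p) \<ge> \<Phi> (X p0) - 1"
    using pmax[of p0] Ft_eq[of "X p"] Ft_eq[of "X p0"] ln0[of "X p"] \<epsilon>0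
    by (smt (verit) mult_nonneg_nonneg)
  moreover have "exp (a1 \<bullet> X p) \<le> exp b1" "exp (a2 \<bullet> X p) \<le> exp b2" using W1[of p] W2[of p] by auto
  ultimately have La: "a1 \<bullet> X p \<ge> L" "a2 \<bullet> X p \<ge> L"
    using W1[of p] W2[of p] abs_ge_self[of b1] abs_ge_self[of b2] unfolding \<Phi>_def L_def by linarith+
  have em: "exp (a1 \<bullet> X p) \<ge> m" "exp (a2 \<bullet> X p) \<ge> m" unfolding m_def using La by auto
  obtain U V \<psi> \<psi>i where ch: "open U" "p \<in> U" "open V" "homeomorphism V U \<psi> \<psi>i" "smooth2_on V (X \<circ> \<psi>)"
     and chz: "\<And>z. z \<in> V \<Longrightarrow> immersion_at (X \<circ> \<psi>) z \<and>
                 N (\<psi> z) \<bullet> pd True (X \<circ> \<psi>) z = 0 \<and>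
                 N (\<psi> z) \<bullet> pd False (X \<circ> \<psi>) z = 0 \<and>
                 meancurv (X \<circ> \<psi>) (N (\<psi> z)) z
                   = deriv \<phi> (X (\<psi> z) \<bullet> e3) * (N (\<psi> z) \<bullet> e3)"
    using charts[of p] by blast
  have hm: "\<forall>y\<in>U. \<psi> (\<psi>i y) = y" "\<psi>i ` U = V" "\<psi> ` V = U"
    using ch(4) unfolding homeomorphism_def by auto
  define z0 where "z0 = \<psi>i p"
  have z0V: "z0 \<in> V" unfolding z0_def using hm ch(2) by blast
  have pz0: "\<psi> z0 = p" unfolding z0_def using hm ch(2) by blast
  define f where "f = X \<circ> \<psi>"
  have fz0: "f z0 = X p" unfolding f_def using pz0 by simp
  have mx: "Ft (f z) \<le> Ft (f z0)" if "z \<in> V" for z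
    unfolding fz0 unfolding f_def o_def by (rule pmax)
  note CSO = chart_second_order[OF ch(3) z0V ch(5)[folded f_def] Ftest_deriv gtest_deriv mx[unfolded Ft_def]]
  define n where "n = gtest a1 a2 \<epsilon> (f z0)"
  have first1: "n \<bullet> pd True f z0 = 0" using CSO(1)[of 1 0] unfolding n_def by simp
  have first2: "n \<bullet> pd False f z0 = 0" using CSO(1)[of 0 1] unfolding n_def by simp
  have sm: "smooth2_on V f" using ch(5) unfolding f_def .
  have schw: "n \<bullet> pd False (pd True f) z0 = n \<bullet> pd True (pd False f) z0"
  proof (rule schwarz_inner[OF ch(3) z0V])
    fix z assume "z \<in> V"
    thus "pd_exists True f z \<and> pd_exists False f z \<and> pd_exists False (pd True f) z \<and> pd_exists True (pd False f) z"
      using smooth2_onD(2)[OF sm, where bs="[]"] smooth2_onD(2)[OF sm, where bs="[True]"]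
        smooth2_onD(2)[OF sm, where bs="[False]"] by simp
  next
    show "continuous_on V (pd False (pd True f))" using smooth2_onD(1)[OF sm, where bs="[False, True]"] by simp
    show "continuous_on V (pd True (pd False f))" using smooth2_onD(1)[OF sm, where bs="[True, False]"] by simp
  qed
  have cz: "immersion_at f z0" "N p \<bullet> pd True f z0 = 0" "N p \<bullet> pd False f z0 = 0"
     "meancurv f (N p) z0 = deriv \<phi> (X p \<bullet> e3) * (N p \<bullet> e3)"
    using chz[OF z0V] pz0 unfolding f_def by auto
  have NN: "N p \<bullet> N p = 1" using normN[of p] by (simp add: dot_square_norm)
  define x where "x = X p"
  have fzx: "f z0 = x" unfolding x_def fz0 ..
  define \<kappa> where "\<kappa> = 2 * \<epsilon> / (1 + x \<bullet> x)"
  define \<mu> where "\<mu> = 4 * \<epsilon> / (1 + x \<bullet> x)^2"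
  have nd: "n = (1 + exp (a1 \<bullet> x)) *\<^sub>R a1 + (1 + exp (a2 \<bullet> x)) *\<^sub>R a2 - \<kappa> *\<^sub>R x"
    unfolding n_def fzx gtest_def \<kappa>_def ..
  have Hd: "\<And>v. Htest a1 a2 \<epsilon> x v = (exp (a1 \<bullet> x) * (a1 \<bullet> v)) *\<^sub>R a1 + (exp (a2 \<bullet> x) * (a2 \<bullet> v)) *\<^sub>R a2 - \<kappa> *\<^sub>R v + (\<mu> * (x \<bullet> v)) *\<^sub>R x"
    unfolding Htest_def \<kappa>_def \<mu>_def ..
  have fr4: "pd True f z0 \<bullet> pd True f z0 * (pd False f z0 \<bullet> pd False f z0) - (pd True f z0 \<bullet> pd False f z0)\<^sup>2 \<noteq> 0"
    using cz(1) unfolding immersion_at_def gramE_def gramF_def gramG_def .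
  have sec: "\<And>\<alpha> \<beta>. Htest a1 a2 \<epsilon> x (\<alpha> *\<^sub>R pd True f z0 + \<beta> *\<^sub>R pd False f z0) \<bullet> (\<alpha> *\<^sub>R pd True f z0 + \<beta> *\<^sub>R pd False f z0)
        + n \<bullet> (\<alpha> *\<^sub>R (\<alpha> *\<^sub>R pd True (pd True f) z0 + \<beta> *\<^sub>R pd False (pd True f) z0)
             + \<beta> *\<^sub>R (\<alpha> *\<^sub>R pd True (pd False f) z0 + \<beta> *\<^sub>R pd False (pd False f) z0)) \<le> 0"
  proof -
    fix \<alpha> \<beta> :: real
    show "?thesis \<alpha> \<beta>" using CSO(2)[of \<alpha> \<beta>] unfolding n_def fzx .
  qed
  have mc: "(pd False f z0 \<bullet> pd False f z0 * (pd True (pd True f) z0 \<bullet> N p) -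
         2 * (pd True f z0 \<bullet> pd False f z0) * (pd True (pd False f) z0 \<bullet> N p) +
         pd True f z0 \<bullet> pd True f z0 * (pd False (pd False f) z0 \<bullet> N p)) /
        (pd True f z0 \<bullet> pd True f z0 * (pd False f z0 \<bullet> pd False f z0) - (pd True f z0 \<bullet> pd False f z0)\<^sup>2) =
        deriv \<phi> (x \<bullet> e3) * (N p \<bullet> e3)"
    using cz(4) unfolding meancurv_def gramE_def gramF_def gramG_def x_def .
  have e1m: "exp (a1 \<bullet> x) \<ge> m" and e2m: "exp (a2 \<bullet> x) \<ge> m" using em unfolding x_def by auto
  have mu0: "\<mu> \<ge> 0" unfolding \<mu>_def using \<epsilon>0 by simp
  have dl: "\<delta> \<le> (a1 \<bullet> a1 - (a1 \<bullet> N p)^2) + (a2 \<bullet> a2 - (a2 \<bullet> N p)^2)" using \<delta>(2) normN by blast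
  have sml: "2 * \<kappa> + \<bar>\<kappa> * (x \<bullet> e3) * deriv \<phi> (x \<bullet> e3)\<bar> < m * \<delta>"
    unfolding \<kappa>_def
  proof (rule small_bound[OF \<epsilon>0 C(1) C(2)])
    show "(x \<bullet> e3)^2 \<le> x \<bullet> x" using Cauchy_Schwarz_ineq[of x e3] by (simp add: inner_axis_axis)
    show "x \<bullet> x \<ge> 0" by simp
    show "\<epsilon> \<le> m * \<delta> / (8 * (1 + C))" unfolding \<epsilon>_def by simp
    show "m * \<delta> > 0" using m0 \<delta> by simp
  qed
  show False
    by (rule key_contra[OF nd Hd NN cz(2) cz(3) fr4 first1 first2 sec schw mc a1(2) a2(2) e1m e2m m0 mu0 dl sml])
qed

end
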